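(* Let $h\ge2$ and let $r_1<s_1<r_2<s_2<\dots<s_{h-1}<r_h$ be real numbers. Let $P\in\mathbb{R}[X]$ be a polynomial of degree $2h$ with positive leading coefficient such that $P(X)>0$ for all $X\in\mathbb{R}$ and $P'(X)=c\,(X-r_h)\prod_{j=1}^{h-1}(X-r_j)(X-s_j)$ for some constant $c>0$. Write $P(X)=\kappa\prod_{j=1}^h\big((X-a_j)^2+b_j^2\big)$ with $\kappa>0$, $a_j,b_j\in\mathbb{R}$, $b_j>0$. Identify $\mathbb{R}^3=\mathbb{C}\times\mathbb{R}$, let $\xi=e^{2\pi i/3}$, and set $w_j^i=(\xi^ib_j,a_j)$ for $1\le j\le h$, $1\le i\le 3$. Let $F(x)=\prod_{j=1}^h\prod_{i=1}^3|x-w_j^i|^2$. Then the $3h$ points $w_j^i$ are pairwise distinct and: (1) the points $(0,r_j)$, $1\le j\le h$, are nondegenerate local minima of $F$ which are not absolute minima; (2) the points $(0,s_j)$, $1\le j\le h-1$, are nondegenerate critical points of $F$ of negativity index $1$; (3) the $3h$ points $w_j^i$ are the absolute minima of $F$.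
   Context: $|\cdot|$ is the Euclidean norm on $\mathbb{R}^3$. The negativity index of a nondegenerate critical point is the number of negative eigenvalues of the Hessian. *)

theory Defs
  imports "HOL-Analysis.Analysis" "HOL-Computational_Algebra.Polynomial"
begin

definition partial_deriv :: "'n::finite \<Rightarrow> (real^'n \<Rightarrow> real) \<Rightarrow> real^'n \<Rightarrow> real" where
  "partial_deriv i f x = deriv (\<lambda>t. f (x + t *\<^sub>R axis i 1)) 0"

definition hessian :: "(real^'n::finite \<Rightarrow> real) \<Rightarrow> real^'n \<Rightarrow> real^'n^'n" where
  "hessian f x = (\<chi> i j. partial_deriv i (partial_deriv j f) x)"

definition critical_point :: "(real^'n::finite \<Rightarrow> real) \<Rightarrow> real^'n \<Rightarrow> bool" where
  "critical_point f x \<longleftrightarrow> (f has_derivative (\<lambda>_. 0)) (at x)"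

definition nondegenerate_critical_point :: "(real^'n::finite \<Rightarrow> real) \<Rightarrow> real^'n \<Rightarrow> bool" where
  "nondegenerate_critical_point f x \<longleftrightarrow> critical_point f x \<and> det (hessian f x) \<noteq> 0"

definition charpoly :: "real^'n::finite^'n \<Rightarrow> real poly" where
  "charpoly A = det (\<chi> i j. (if i = j then [:0, 1:] else 0) - [:A $ i $ j:])"

definition negativity_index :: "(real^'n::finite \<Rightarrow> real) \<Rightarrow> real^'n \<Rightarrow> nat" where
  "negativity_index f x =
     (\<Sum>e\<in>{e. e < 0 \<and> poly (charpoly (hessian f x)) e = 0}. order e (charpoly (hessian f x)))"

definition local_min_at :: "(real^'n::finite \<Rightarrow> real) \<Rightarrow> real^'n \<Rightarrow> bool" where
  "local_min_at f x \<longleftrightarrow> (\<exists>e>0. \<forall>y. dist y x < e \<longrightarrow> f x \<le> f y)"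

definition global_min_at :: "(real^'n::finite \<Rightarrow> real) \<Rightarrow> real^'n \<Rightarrow> bool" where
  "global_min_at f x \<longleftrightarrow> (\<forall>y. f x \<le> f y)"

definition pt3 :: "complex \<Rightarrow> real \<Rightarrow> real^3" where
  "pt3 z t = vector [Re z, Im z, t]"

definition xi :: complex where "xi = cis (2 * pi / 3)"

definition wpt :: "(nat \<Rightarrow> real) \<Rightarrow> (nat \<Rightarrow> real) \<Rightarrow> nat \<Rightarrow> nat \<Rightarrow> real^3" where
  "wpt a b j i = pt3 (xi ^ i * complex_of_real (b j)) (a j)"

definition Ffun :: "nat \<Rightarrow> (nat \<Rightarrow> real) \<Rightarrow> (nat \<Rightarrow> real) \<Rightarrow> real^3 \<Rightarrow> real" where
  "Ffun h a b x = (\<Prod>j\<in>{1..h}. \<Prod>i\<in>{1..3}. (norm (x - wpt a b j i))^2)"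

end

theory Submission
  imports Defs
begin


lemma pd_hasderiv:
  assumes "(f has_derivative D) (at x)"
  shows "partial_deriv i f x = D (axis i 1)"
proof -
  have g: "((\<lambda>t::real. x + t *\<^sub>R axis i 1) has_derivative (\<lambda>t. t *\<^sub>R axis i 1)) (at 0)"
    by (auto intro!: derivative_eq_intros)
  have f0: "(f has_derivative D) (at (x + 0 *\<^sub>R axis i 1))" using assms by simp
  have "((\<lambda>t. f (x + t *\<^sub>R axis i 1)) has_derivative (\<lambda>t. D (t *\<^sub>R axis i 1))) (at 0)"
    using has_derivative_compose[OF g f0] by (simp add: o_def)
  moreover have "(\<lambda>t. D (t *\<^sub>R axis i 1)) = (\<lambda>t. t * D (axis i 1))"
    using has_derivative_bounded_linear[OF assms] by (simp add: linear_simps)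
  moreover have "(*) (D (axis i 1)) = (\<lambda>t. t * D (axis i 1))" by (auto simp: fun_eq_iff)
  ultimately have "((\<lambda>t. f (x + t *\<^sub>R axis i 1)) has_real_derivative D (axis i 1)) (at 0)"
    unfolding has_field_derivative_def by metis
  then show ?thesis unfolding partial_deriv_def by (rule DERIV_imp_deriv)
qed

lemma prod_pd1:
  assumes dG: "\<And>j y. j \<in> J \<Longrightarrow> (G j has_derivative DG j y) (at y)"
  shows "partial_deriv k (\<lambda>y. \<Prod>j\<in>J. G j y) =
     (\<lambda>y. \<Sum>j\<in>J. DG j y (axis k 1) * (\<Prod>l\<in>J-{j}. G l y))"
proof
  fix y
  have "((\<lambda>y. \<Prod>j\<in>J. G j y) has_derivative (\<lambda>v. \<Sum>j\<in>J. DG j y v * (\<Prod>l\<in>J-{j}. G l y))) (at y)"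
    using dG by (intro has_derivative_prod) auto
  then show "partial_deriv k (\<lambda>y. \<Prod>j\<in>J. G j y) y = (\<Sum>j\<in>J. DG j y (axis k 1) * (\<Prod>l\<in>J-{j}. G l y))"
    by (rule pd_hasderiv)
qed

lemma prod_pd2:
  assumes dG: "\<And>j y. j \<in> J \<Longrightarrow> (G j has_derivative DG j y) (at y)"
    and dDG: "\<And>j y. j \<in> J \<Longrightarrow> ((\<lambda>y. DG j y (axis k 1)) has_derivative DD j y) (at y)"
  shows "partial_deriv i (partial_deriv k (\<lambda>y. \<Prod>j\<in>J. G j y)) x =
     (\<Sum>j\<in>J. DD j x (axis i 1) * (\<Prod>l\<in>J-{j}. G l x)
        + DG j x (axis k 1) * (\<Sum>l\<in>J-{j}. DG l x (axis i 1) * (\<Prod>m\<in>J-{j}-{l}. G m x)))"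
proof -
  have "((\<lambda>y. \<Sum>j\<in>J. DG j y (axis k 1) * (\<Prod>l\<in>J-{j}. G l y)) has_derivative
     (\<lambda>v. \<Sum>j\<in>J. DG j x (axis k 1) * (\<Sum>l\<in>J-{j}. DG l x v * (\<Prod>m\<in>J-{j}-{l}. G m x))
        + DD j x v * (\<Prod>l\<in>J-{j}. G l x))) (at x)"
    using dG dDG by (intro has_derivative_sum has_derivative_mult has_derivative_prod) auto
  then have "partial_deriv i (\<lambda>y. \<Sum>j\<in>J. DG j y (axis k 1) * (\<Prod>l\<in>J-{j}. G l y)) x =
     (\<Sum>j\<in>J. DG j x (axis k 1) * (\<Sum>l\<in>J-{j}. DG l x (axis i 1) * (\<Prod>m\<in>J-{j}-{l}. G m x))
        + DD j x (axis i 1) * (\<Prod>l\<in>J-{j}. G l x))"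
    by (rule pd_hasderiv)
  moreover have e: "partial_deriv k (\<lambda>y. \<Prod>j\<in>J. G j y) =
     (\<lambda>y. \<Sum>j\<in>J. DG j y (axis k 1) * (\<Prod>l\<in>J-{j}. G l y))"
    by (rule prod_pd1) (rule dG)
  ultimately show ?thesis by (simp add: add.commute)
qed


definition gam :: "real \<Rightarrow> real \<Rightarrow> real \<Rightarrow> real \<Rightarrow> real" where
 "gam b X Y D = (X\<^sup>2+Y\<^sup>2+b\<^sup>2+D\<^sup>2)^3 - 3*b\<^sup>2*(X\<^sup>2+Y\<^sup>2)*(X\<^sup>2+Y\<^sup>2+b\<^sup>2+D\<^sup>2) - 2*b^3*(X^3 - 3*X*Y\<^sup>2)"

lemma gam_poly_id0:
  fixes q :: real assumes q: "q*q = 3"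
  shows "((X + C)\<^sup>2 + (Y - q*C)\<^sup>2 + D\<^sup>2) * (((X + C)\<^sup>2 + (Y + q*C)\<^sup>2 + D\<^sup>2) *
          ((X - 2*C)\<^sup>2 + Y\<^sup>2 + D\<^sup>2)) = gam (2*C) X Y D"
proof -
  have 1: "(Y - q*C)\<^sup>2 = Y\<^sup>2 - 2*q*C*Y + (q*q)*C\<^sup>2" by (simp add: power2_eq_square algebra_simps)
  have 2: "(Y + q*C)\<^sup>2 = Y\<^sup>2 + 2*q*C*Y + (q*q)*C\<^sup>2" by (simp add: power2_eq_square algebra_simps)
  have 3: "((X + C)\<^sup>2 + (Y\<^sup>2 - 2*q*C*Y + 3*C\<^sup>2) + D\<^sup>2) * ((X + C)\<^sup>2 + (Y\<^sup>2 + 2*q*C*Y + 3*C\<^sup>2) + D\<^sup>2)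
     = ((X + C)\<^sup>2 + Y\<^sup>2 + 3*C\<^sup>2 + D\<^sup>2)\<^sup>2 - 4*(q*q)*C\<^sup>2*Y\<^sup>2"
    by (simp add: power2_eq_square algebra_simps)
  have 4: "(((X + C)\<^sup>2 + Y\<^sup>2 + 3*C\<^sup>2 + D\<^sup>2)\<^sup>2 - 4*3*C\<^sup>2*Y\<^sup>2) * ((X - 2*C)\<^sup>2 + Y\<^sup>2 + D\<^sup>2) = gam (2*C) X Y D"
    unfolding gam_def by algebra
  show ?thesis unfolding 1 2 q mult.assoc[symmetric] 3 using 4 by (simp add: q)
qed

lemma gam_poly_id:
  fixes q :: real assumes "q*q = 3"
  shows "((X + B/2)\<^sup>2 + (Y - q*B/2)\<^sup>2 + D\<^sup>2) * (((X + B/2)\<^sup>2 + (Y + q*B/2)\<^sup>2 + D\<^sup>2) *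
          ((X - B)\<^sup>2 + Y\<^sup>2 + D\<^sup>2)) = gam B X Y D"
  using gam_poly_id0[OF assms, of X "B/2" Y D] by simp

lemma norm3: "(norm (v::real^3))\<^sup>2 = (v$1)\<^sup>2 + (v$2)\<^sup>2 + (v$3)\<^sup>2"
  by (simp add: power2_norm_eq_inner inner_vec_def sum_3 power2_eq_square[symmetric])

lemma xi_val: "xi = Complex (-1/2) (sqrt 3/2)"
  unfolding xi_def by (simp add: complex_eq_iff cos_120 sin_120)

lemma xi2: "xi^2 = Complex (-1/2) (-sqrt 3/2)"
  by (simp add: xi_val power2_eq_square complex_eq_iff field_simps)

lemma xi3: "xi^3 = 1"
proof -
  have "xi^3 = xi^2 * xi" by (simp add: power3_eq_cube power2_eq_square)
  also have "\<dots> = Complex (-1/2) (-sqrt 3/2) * Complex (-1/2) (sqrt 3/2)"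
    by (simp only: xi2, simp add: xi_val)
  also have "\<dots> = 1" by (simp add: complex_eq_iff algebra_simps)
  finally show ?thesis .
qed

lemma pt3_nth[simp]: "pt3 z t $ 1 = Re z" "pt3 z t $ 2 = Im z" "pt3 z t $ 3 = t"
  by (simp_all add: pt3_def)

lemma prod_wpt:
  "(\<Prod>i\<in>{1..3::nat}. (norm (y - wpt a b j i))\<^sup>2) = gam (b j) (y$1) (y$2) (y$3 - a j)"
proof -
  have s: "sqrt 3 * sqrt 3 = (3::real)" by simp
  have e: "{1..3::nat} = {1,2,3}" by auto
  have n1: "(norm (y - wpt a b j 1))\<^sup>2 = (y$1 + b j/2)\<^sup>2 + (y$2 - sqrt 3 * b j/2)\<^sup>2 + (y$3 - a j)\<^sup>2"
    by (simp add: norm3 wpt_def xi_val algebra_simps)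
  have n2: "(norm (y - wpt a b j 2))\<^sup>2 = (y$1 + b j/2)\<^sup>2 + (y$2 + sqrt 3 * b j/2)\<^sup>2 + (y$3 - a j)\<^sup>2"
    by (simp add: norm3 wpt_def xi2 algebra_simps)
  have n3: "(norm (y - wpt a b j 3))\<^sup>2 = (y$1 - b j)\<^sup>2 + (y$2)\<^sup>2 + (y$3 - a j)\<^sup>2"
    by (simp add: norm3 wpt_def xi3 algebra_simps)
  show ?thesis
  proof -
    have "(\<Prod>i\<in>{1,2,3::nat}. (norm (y - wpt a b j i))\<^sup>2) =
       (norm (y - wpt a b j 1))\<^sup>2 * ((norm (y - wpt a b j 2))\<^sup>2 * (norm (y - wpt a b j 3))\<^sup>2)"
      by (simp del: One_nat_def)
    then show ?thesis unfolding e n1 n2 n3 using gam_poly_id[OF s, of "y$1" "b j" "y$2" "y$3 - a j"]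
      by (simp add: mult.commute)
  qed
qed


definition gX :: "real \<Rightarrow> real \<Rightarrow> real \<Rightarrow> real \<Rightarrow> real" where
 "gX b X Y D = 6*X*(X\<^sup>2+Y\<^sup>2+b\<^sup>2+D\<^sup>2)\<^sup>2 - 6*b\<^sup>2*X*(X\<^sup>2+Y\<^sup>2+b\<^sup>2+D\<^sup>2) - 6*b\<^sup>2*(X\<^sup>2+Y\<^sup>2)*X - 6*b^3*(X\<^sup>2 - Y\<^sup>2)"
definition gY :: "real \<Rightarrow> real \<Rightarrow> real \<Rightarrow> real \<Rightarrow> real" where
 "gY b X Y D = 6*Y*(X\<^sup>2+Y\<^sup>2+b\<^sup>2+D\<^sup>2)\<^sup>2 - 6*b\<^sup>2*Y*(X\<^sup>2+Y\<^sup>2+b\<^sup>2+D\<^sup>2) - 6*b\<^sup>2*(X\<^sup>2+Y\<^sup>2)*Y + 12*b^3*X*Y"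
definition gD :: "real \<Rightarrow> real \<Rightarrow> real \<Rightarrow> real \<Rightarrow> real" where
 "gD b X Y D = 6*D*(X\<^sup>2+Y\<^sup>2+b\<^sup>2+D\<^sup>2)\<^sup>2 - 6*b\<^sup>2*(X\<^sup>2+Y\<^sup>2)*D"

lemma has_derivative_nth[derivative_intros]:
  "((\<lambda>y::real^'n. y $ i) has_derivative (\<lambda>v. v $ i)) (at y within S)"
  by (rule bounded_linear_imp_has_derivative) (rule bounded_linear_vec_nth)

lemma differentiable_nth[derivative_intros]:
  "(\<lambda>y::real^'n. y $ i) differentiable (at y within S)"
  using has_derivative_nth unfolding differentiable_def by blast

definition DGf :: "real \<Rightarrow> real \<Rightarrow> real^3 \<Rightarrow> real^3 \<Rightarrow> real" where
  "DGf a b y v = v$1 * gX b (y$1) (y$2) (y$3 - a) + v$2 * gY b (y$1) (y$2) (y$3 - a) + v$3 * gD b (y$1) (y$2) (y$3 - a)"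

lemma gam_deriv:
  "((\<lambda>y::real^3. gam b (y$1) (y$2) (y$3 - a)) has_derivative DGf a b y) (at y)"
  unfolding gam_def DGf_def gX_def gY_def gD_def
  apply (rule derivative_eq_intros refl | simp)+
  apply (simp add: fun_eq_iff algebra_simps power2_eq_square power3_eq_cube)
  done

lemma DGf_diff: "(\<lambda>y. DGf a b y v) differentiable (at y)"
  unfolding DGf_def gX_def gY_def gD_def
  by (intro derivative_intros)


lemma axis_comp: "axis i (1::real) $ m = (if m = i then 1 else 0)"
  by (simp add: axis_def)

lemma line_comp: "(pt3 z t + s *\<^sub>R axis i 1) $ m = pt3 z t $ m + (if m = i then s else 0)"
  by (simp add: axis_def)

lemma pd_line: "((\<lambda>s. f (x + s *\<^sub>R axis i 1)) has_real_derivative D) (at 0) \<Longrightarrow> partial_deriv i f x = D"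
  unfolding partial_deriv_def by (rule DERIV_imp_deriv)

lemma three_neq[simp]: "(1::3) \<noteq> 2" "(1::3) \<noteq> 3" "(2::3) \<noteq> 3" "(2::3) \<noteq> 1" "(3::3) \<noteq> 1" "(3::3) \<noteq> 2"
  by simp_all

lemma PD11: "partial_deriv 1 (\<lambda>y. DGf a b y (axis 1 1)) (pt3 0 t) = 6*(b\<^sup>2+(t-a)\<^sup>2)*(t-a)\<^sup>2"
  apply (rule pd_line)
  unfolding DGf_def line_comp axis_comp gX_def gY_def gD_def
  apply (simp)?
  apply ((rule derivative_eq_intros refl | simp)+)?
  apply (simp add: algebra_simps power2_eq_square)?
  done

lemma PD22: "partial_deriv 2 (\<lambda>y. DGf a b y (axis 2 1)) (pt3 0 t) = 6*(b\<^sup>2+(t-a)\<^sup>2)*(t-a)\<^sup>2"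
  apply (rule pd_line)
  unfolding DGf_def line_comp axis_comp gX_def gY_def gD_def
  apply (simp)?
  apply ((rule derivative_eq_intros refl | simp)+)?
  apply (simp add: algebra_simps power2_eq_square)?
  done

lemma PD12: "partial_deriv 1 (\<lambda>y. DGf a b y (axis 2 1)) (pt3 0 t) = 0"
  apply (rule pd_line)
  unfolding DGf_def line_comp axis_comp gX_def gY_def gD_def
  apply (simp)?
  apply ((rule derivative_eq_intros refl | simp)+)?
  apply (simp add: algebra_simps power2_eq_square)?
  done

lemma PD21: "partial_deriv 2 (\<lambda>y. DGf a b y (axis 1 1)) (pt3 0 t) = 0"
  apply (rule pd_line)
  unfolding DGf_def line_comp axis_comp gX_def gY_def gD_def
  apply (simp)?
  apply ((rule derivative_eq_intros refl | simp)+)?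
  apply (simp add: algebra_simps power2_eq_square)?
  done

lemma PD13: "partial_deriv 1 (\<lambda>y. DGf a b y (axis 3 1)) (pt3 0 t) = 0"
  apply (rule pd_line)
  unfolding DGf_def line_comp axis_comp gX_def gY_def gD_def
  apply (simp)?
  apply ((rule derivative_eq_intros refl | simp)+)?
  apply (simp add: algebra_simps power2_eq_square)?
  done

lemma PD31: "partial_deriv 3 (\<lambda>y. DGf a b y (axis 1 1)) (pt3 0 t) = 0"
  apply (rule pd_line)
  unfolding DGf_def line_comp axis_comp gX_def gY_def gD_def
  apply (simp)?
  apply ((rule derivative_eq_intros refl | simp)+)?
  apply (simp add: algebra_simps power2_eq_square)?
  done

lemma PD23: "partial_deriv 2 (\<lambda>y. DGf a b y (axis 3 1)) (pt3 0 t) = 0"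
  apply (rule pd_line)
  unfolding DGf_def line_comp axis_comp gX_def gY_def gD_def
  apply (simp)?
  apply ((rule derivative_eq_intros refl | simp)+)?
  apply (simp add: algebra_simps power2_eq_square)?
  done

lemma PD32: "partial_deriv 3 (\<lambda>y. DGf a b y (axis 2 1)) (pt3 0 t) = 0"
  apply (rule pd_line)
  unfolding DGf_def line_comp axis_comp gX_def gY_def gD_def
  apply (simp)?
  apply ((rule derivative_eq_intros refl | simp)+)?
  apply (simp add: algebra_simps power2_eq_square)?
  done

lemma PD_axis:
  assumes "\<not> (i = 3 \<and> k = 3)"
  shows "partial_deriv i (\<lambda>y. DGf a b y (axis k 1)) (pt3 0 t) = (if i = k then 6*(b\<^sup>2+(t-a)\<^sup>2)*(t-a)\<^sup>2 else 0)"
  using assms exhaust_3[of i] exhaust_3[of k]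
  by (auto simp add: PD11 PD22 PD12 PD21 PD13 PD31 PD23 PD32)


lemma prod_pd2':
  assumes dG: "\<And>j y. j \<in> J \<Longrightarrow> (G j has_derivative DG j y) (at y)"
    and dd: "\<And>j y. j \<in> J \<Longrightarrow> (\<lambda>y. DG j y (axis k 1)) differentiable (at y)"
  shows "partial_deriv i (partial_deriv k (\<lambda>y. \<Prod>j\<in>J. G j y)) x =
     (\<Sum>j\<in>J. partial_deriv i (\<lambda>y. DG j y (axis k 1)) x * (\<Prod>l\<in>J-{j}. G l x)
        + DG j x (axis k 1) * (\<Sum>l\<in>J-{j}. DG l x (axis i 1) * (\<Prod>m\<in>J-{j}-{l}. G m x)))"
proof -
  define DD where "DD j y = (SOME D. ((\<lambda>y. DG j y (axis k 1)) has_derivative D) (at y))" for j y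
  have hd: "((\<lambda>y. DG j y (axis k 1)) has_derivative DD j y) (at y)" if "j \<in> J" for j y
    using dd[OF that, of y] unfolding differentiable_def DD_def by (rule someI_ex)
  have "partial_deriv i (partial_deriv k (\<lambda>y. \<Prod>j\<in>J. G j y)) x =
     (\<Sum>j\<in>J. DD j x (axis i 1) * (\<Prod>l\<in>J-{j}. G l x)
        + DG j x (axis k 1) * (\<Sum>l\<in>J-{j}. DG l x (axis i 1) * (\<Prod>m\<in>J-{j}-{l}. G m x)))"
    by (rule prod_pd2) (use dG hd in auto)
  also have "\<dots> = (\<Sum>j\<in>J. partial_deriv i (\<lambda>y. DG j y (axis k 1)) x * (\<Prod>l\<in>J-{j}. G l x)
        + DG j x (axis k 1) * (\<Sum>l\<in>J-{j}. DG l x (axis i 1) * (\<Prod>m\<in>J-{j}-{l}. G m x)))"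
    by (rule sum.cong) (auto simp: pd_hasderiv[OF hd])
  finally show ?thesis .
qed

lemma Ffun_eq: "Ffun h a b = (\<lambda>y. \<Prod>j\<in>{1..h}. gam (b j) (y$1) (y$2) (y$3 - a j))"
  unfolding Ffun_def prod_wpt by simp

lemma gam_axis: "gam b 0 0 D = (b\<^sup>2 + D\<^sup>2)^3"
  by (simp add: gam_def)

lemma DGf_axis: "DGf a b (pt3 0 t) v = v$3 * (6*(t-a)*(b\<^sup>2+(t-a)\<^sup>2)\<^sup>2)"
  by (simp add: DGf_def gX_def gY_def gD_def)

lemma hess_axis:
  assumes "\<not> (i = 3 \<and> k = 3)"
  shows "partial_deriv i (partial_deriv k (Ffun h a b)) (pt3 0 t) =
    (if i = k then (\<Sum>j\<in>{1..h}. 6*((b j)\<^sup>2+(t-a j)\<^sup>2)*(t-a j)\<^sup>2 *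
        (\<Prod>l\<in>{1..h}-{j}. ((b l)\<^sup>2 + (t - a l)\<^sup>2)^3)) else 0)"
proof -
  have "partial_deriv i (partial_deriv k (Ffun h a b)) (pt3 0 t) =
     (\<Sum>j\<in>{1..h}. partial_deriv i (\<lambda>y. DGf (a j) (b j) y (axis k 1)) (pt3 0 t) *
         (\<Prod>l\<in>{1..h}-{j}. gam (b l) (pt3 0 t$1) (pt3 0 t$2) (pt3 0 t$3 - a l))
        + DGf (a j) (b j) (pt3 0 t) (axis k 1) * (\<Sum>l\<in>{1..h}-{j}. DGf (a l) (b l) (pt3 0 t) (axis i 1) *
            (\<Prod>m\<in>{1..h}-{j}-{l}. gam (b m) (pt3 0 t$1) (pt3 0 t$2) (pt3 0 t$3 - a m))))"
    unfolding Ffun_eq by (rule prod_pd2') (auto intro: gam_deriv DGf_diff)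
  also have "\<dots> = (\<Sum>j\<in>{1..h}. partial_deriv i (\<lambda>y. DGf (a j) (b j) y (axis k 1)) (pt3 0 t) *
         (\<Prod>l\<in>{1..h}-{j}. ((b l)\<^sup>2 + (t - a l)\<^sup>2)^3))"
  proof (rule sum.cong[OF refl])
    fix j
    have "DGf (a j) (b j) (pt3 0 t) (axis k 1) * (\<Sum>l\<in>{1..h}-{j}. DGf (a l) (b l) (pt3 0 t) (axis i 1) *
            (\<Prod>m\<in>{1..h}-{j}-{l}. gam (b m) (pt3 0 t$1) (pt3 0 t$2) (pt3 0 t$3 - a m))) = 0"
      using assms by (auto simp: DGf_axis axis_comp)
    then show "partial_deriv i (\<lambda>y. DGf (a j) (b j) y (axis k 1)) (pt3 0 t) *
         (\<Prod>l\<in>{1..h}-{j}. gam (b l) (pt3 0 t$1) (pt3 0 t$2) (pt3 0 t$3 - a l))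
        + DGf (a j) (b j) (pt3 0 t) (axis k 1) * (\<Sum>l\<in>{1..h}-{j}. DGf (a l) (b l) (pt3 0 t) (axis i 1) *
            (\<Prod>m\<in>{1..h}-{j}-{l}. gam (b m) (pt3 0 t$1) (pt3 0 t$2) (pt3 0 t$3 - a m))) =
      partial_deriv i (\<lambda>y. DGf (a j) (b j) y (axis k 1)) (pt3 0 t) *
         (\<Prod>l\<in>{1..h}-{j}. ((b l)\<^sup>2 + (t - a l)\<^sup>2)^3)"
      by (simp add: gam_axis)
  qed
  also have "\<dots> = (if i = k then (\<Sum>j\<in>{1..h}. 6*((b j)\<^sup>2+(t-a j)\<^sup>2)*(t-a j)\<^sup>2 *
        (\<Prod>l\<in>{1..h}-{j}. ((b l)\<^sup>2 + (t - a l)\<^sup>2)^3)) else 0)"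
    using PD_axis[OF assms] by (cases "i = k") auto
  finally show ?thesis .
qed


lemma pt3_line3: "pt3 z u + s *\<^sub>R axis 3 1 = pt3 z (u + s)"
  by (simp add: vec_eq_iff forall_3 line_comp axis_comp)

lemma pd3_axis:
  assumes "\<And>u. ((\<lambda>u. f (pt3 0 u)) has_real_derivative g' u) (at u)"
  shows "partial_deriv 3 f (pt3 0 u) = g' u"
proof (rule pd_line)
  have "((\<lambda>s. f (pt3 0 (s + u))) has_real_derivative g' u) (at 0)"
    using assms[of u] DERIV_shift[of "\<lambda>u. f (pt3 0 u)" "g' u" 0 u] by simp
  then show "((\<lambda>s. f (pt3 0 u + s *\<^sub>R axis 3 1)) has_real_derivative g' u) (at 0)"
    by (simp add: pt3_line3 add.commute)
qed

definition psi1 :: "real poly \<Rightarrow> real \<Rightarrow> real \<Rightarrow> real" where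
  "psi1 P k u = 3*(poly P u)^2 * poly (pderiv P) u / k^3"
definition psi2 :: "real poly \<Rightarrow> real \<Rightarrow> real \<Rightarrow> real" where
  "psi2 P k u = (6*poly P u*(poly (pderiv P) u)^2 + 3*(poly P u)^2*poly (pderiv (pderiv P)) u)/k^3"

lemma psi_d1: "k \<noteq> 0 \<Longrightarrow> ((\<lambda>u. (poly P u)^3 / k^3) has_real_derivative psi1 P k u) (at u)"
  unfolding psi1_def
  apply (rule derivative_eq_intros poly_DERIV refl | simp)+
  apply (simp add: field_simps power2_eq_square power3_eq_cube eval_nat_numeral)
  done

lemma psi_d2: "k \<noteq> 0 \<Longrightarrow> ((\<lambda>u. psi1 P k u) has_real_derivative psi2 P k u) (at u)"
  unfolding psi1_def psi2_def
  apply (rule derivative_eq_intros poly_DERIV refl | simp)+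
  apply (simp add: field_simps power2_eq_square power3_eq_cube eval_nat_numeral)
  done

lemma H33:
  assumes psi: "\<And>u. F (pt3 0 u) = (poly P u)^3 / k^3" and k: "k \<noteq> 0"
  shows "partial_deriv 3 (partial_deriv 3 F) (pt3 0 t) = psi2 P k t"
proof -
  have d1: "partial_deriv 3 F (pt3 0 u) = psi1 P k u" for u
    by (rule pd3_axis) (simp add: psi psi_d1 k)
  show ?thesis
    by (rule pd3_axis) (simp add: d1 psi_d2 k)
qed


lemma crit_axis:
  assumes psi: "\<And>u. Ffun h a b (pt3 0 u) = (poly P u)^3 / k^3" and k: "k \<noteq> 0"
    and P1: "poly (pderiv P) t = 0"
  shows "critical_point (Ffun h a b) (pt3 0 t)"
proof -
  let ?x = "pt3 0 t"
  define D where "D = (\<lambda>v. \<Sum>j\<in>{1..h}. DGf (a j) (b j) ?x v *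
      (\<Prod>l\<in>{1..h}-{j}. gam (b l) (?x$1) (?x$2) (?x$3 - a l)))"
  have hd: "(Ffun h a b has_derivative D) (at ?x)"
    unfolding Ffun_eq D_def by (rule has_derivative_prod) (rule gam_deriv)
  have "D (axis 3 1) = partial_deriv 3 (Ffun h a b) ?x"
    using pd_hasderiv[OF hd] by simp
  also have "\<dots> = psi1 P k t"
    by (rule pd3_axis) (simp add: psi psi_d1 k)
  also have "\<dots> = 0" by (simp add: psi1_def P1)
  finally have D3: "D (axis 3 1) = 0" .
  have "D v = v$3 * D (axis 3 1)" for v
    unfolding D_def DGf_axis by (simp add: sum_distrib_left mult.assoc)
  then have "D = (\<lambda>_. 0)" using D3 by auto
  then show ?thesis using hd unfolding critical_point_def by simp
qed


lemma local_min_1d: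
  fixes f f' :: "real \<Rightarrow> real"
  assumes d: "\<And>x. DERIV f x :> f' x" and d2: "DERIV f' r :> l" and l: "l > 0" and z: "f' r = 0"
  shows "\<exists>e>0. \<forall>u. \<bar>u - r\<bar> < e \<longrightarrow> f r \<le> f u"
proof -
  obtain d1 where d1: "d1 > 0" "\<And>h. h > 0 \<Longrightarrow> h < d1 \<Longrightarrow> f' r < f' (r + h)"
    using DERIV_pos_inc_right[OF d2 l] by blast
  obtain d2 where d2: "d2 > 0" "\<And>h. h > 0 \<Longrightarrow> h < d2 \<Longrightarrow> f' (r - h) < f' r"
    using DERIV_pos_inc_left[OF d2 l] by blast
  show ?thesis
  proof (intro exI[of _ "min d1 d2"] conjI allI impI)
    show "min d1 d2 > 0" using d1 d2 by simp
    fix u assume u: "\<bar>u - r\<bar> < min d1 d2"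
    consider "u = r" | "r < u" | "u < r" by linarith
    then show "f r \<le> f u"
    proof cases
      case 1 then show ?thesis by simp
    next
      case 2
      then obtain z where zz: "r < z" "z < u" "f u - f r = (u - r) * f' z"
        using MVT2[of r u f f'] d by blast
      have "f' z > 0" using d1(2)[of "z - r"] zz u z by auto
      then have "(u - r) * f' z \<ge> 0" using 2 by simp
      then show ?thesis using zz by linarith
    next
      case 3
      then obtain z where zz: "u < z" "z < r" "f r - f u = (r - u) * f' z"
        using MVT2[of u r f f'] d by blast
      have "f' z < 0" using d2(2)[of "r - z"] zz u z by auto
      then have "(r - u) * f' z \<le> 0" using 3 by (simp add: mult_nonneg_nonpos)
      then show ?thesis using zz by simp
    qed
  qed
qed

lemma gam_lb:
  assumes b: "b > 0"
  shows "gam b X Y D \<ge> (b\<^sup>2+D\<^sup>2)^3 + 3*D\<^sup>2*(b\<^sup>2+D\<^sup>2)*(X\<^sup>2+Y\<^sup>2) - 2*b^3*(sqrt(X\<^sup>2+Y\<^sup>2))^3"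
proof -
  define p where "p = X\<^sup>2+Y\<^sup>2"
  define \<rho> where "\<rho> = sqrt p"
  have p0: "p \<ge> 0" unfolding p_def by simp
  have rho2: "\<rho>^2 = p" unfolding \<rho>_def by (rule real_sqrt_pow2[OF p0])
  have rho0: "\<rho> \<ge> 0" unfolding \<rho>_def using p0 by simp
  have id: "p^3 - (X^3 - 3*X*Y\<^sup>2)\<^sup>2 = (3*X\<^sup>2*Y - Y^3)\<^sup>2"
    unfolding p_def by algebra
  have "(X^3 - 3*X*Y\<^sup>2)\<^sup>2 \<le> (\<rho>^3)\<^sup>2"
  proof -
    have "(\<rho>^3)\<^sup>2 = p^3" by (metis rho2 power_mult power_mult_distrib mult.commute)
    then show ?thesis using id by (metis diff_ge_0_iff_ge zero_le_power2)
  qed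
  then have c3: "X^3 - 3*X*Y\<^sup>2 \<le> \<rho>^3" by (rule power2_le_imp_le) (simp add: rho0)
  have c3b: "b^3 * (X^3 - 3*X*Y\<^sup>2) \<le> b^3 * \<rho>^3" using c3 b by (simp add: mult_left_mono)
  have eq: "gam b X Y D = ((b\<^sup>2+D\<^sup>2)^3 + 3*D\<^sup>2*(b\<^sup>2+D\<^sup>2)*p) + (3*D\<^sup>2*p\<^sup>2 + p^3) - 2*b^3*(X^3 - 3*X*Y\<^sup>2)"
    unfolding gam_def p_def by algebra
  have nn: "3*D\<^sup>2*p\<^sup>2 + p^3 \<ge> 0" using p0 by simp
  show ?thesis using eq nn c3b unfolding p_def[symmetric] \<rho>_def[symmetric] by linarith
qed


lemma scalar_ineq:
  fixes K g \<rho> :: real and n :: nat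
  assumes r0: "0 \<le> \<rho>" and r1: "\<rho> \<le> 1" and g: "0 < g" and K: "0 \<le> K"
    and a1: "(real n + 1) * K * \<rho> \<le> g/4" and a2: "(real n + 1) * K * \<rho> \<le> 1/4"
  shows "0 \<le> 1 - K*\<rho>^3" "0 \<le> 1 + g*\<rho>\<^sup>2 - K*\<rho>^3"
    "1 \<le> (1 + g*\<rho>\<^sup>2 - K*\<rho>^3) * (1 - K*\<rho>^3)^n"
proof -
  define m where "m = (real n + 1) * K"
  define u where "u = m * \<rho>^3"
  have m0: "0 \<le> m" unfolding m_def using K by simp
  have Km: "K \<le> m" unfolding m_def using K by (simp add: algebra_simps)
  have nKm: "real n * K \<le> m" unfolding m_def using K by (simp add: algebra_simps)
  have rr: "\<rho>^2 \<le> 1" using r0 r1 by (simp add: power_le_one)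
  have r2: "0 \<le> \<rho>^2" by simp
  have u_eq: "u = (m*\<rho>) * \<rho>^2" unfolding u_def by (simp add: power2_eq_square power3_eq_cube)
  have u0: "0 \<le> u" unfolding u_def using m0 r0 by simp
  have u1: "u \<le> 1/4"
  proof -
    have "(m*\<rho>) * \<rho>^2 \<le> (1/4) * 1" using a2 rr r2 m0 r0 unfolding m_def[symmetric]
      by (intro mult_mono) auto
    then show ?thesis using u_eq by simp
  qed
  have u2: "u \<le> (g/4) * \<rho>^2"
  proof -
    have "(m*\<rho>) * \<rho>^2 \<le> (g/4) * \<rho>^2" using a1 r2 unfolding m_def[symmetric] by (rule mult_right_mono)
    then show ?thesis using u_eq by simp
  qed
  have Kr: "K*\<rho>^3 \<le> u" unfolding u_def using Km r0 by (simp add: mult_right_mono)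
  have nKr: "real n * K*\<rho>^3 \<le> u" unfolding u_def using nKm r0 by (simp add: mult_right_mono)
  have Kr0: "0 \<le> K*\<rho>^3" using K r0 by simp
  show A0: "0 \<le> 1 - K*\<rho>^3" using Kr u1 by linarith
  have gr: "0 \<le> g*\<rho>\<^sup>2" using g by simp
  show B0: "0 \<le> 1 + g*\<rho>\<^sup>2 - K*\<rho>^3" using Kr u1 gr by linarith
  have bern: "1 - real n * (K*\<rho>^3) \<le> (1 - K*\<rho>^3)^n"
    using Bernoulli_inequality[of "- (K*\<rho>^3)" n] A0 by simp
  have "(1 - u) \<le> (1 - K*\<rho>^3)^n" using bern nKr by (simp add: algebra_simps)
  moreover have "1 + g*\<rho>\<^sup>2 - u \<le> 1 + g*\<rho>\<^sup>2 - K*\<rho>^3" using Kr by simp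
  ultimately have "(1 + g*\<rho>\<^sup>2 - u) * (1 - u) \<le> (1 + g*\<rho>\<^sup>2 - K*\<rho>^3) * (1 - K*\<rho>^3)^n"
    using u1 gr B0 by (intro mult_mono) auto
  moreover have "1 \<le> (1 + g*\<rho>\<^sup>2 - u) * (1 - u)"
  proof -
    have e: "(1 + g*\<rho>\<^sup>2 - u) * (1 - u) = 1 + g*\<rho>\<^sup>2 - 2*u - u*(g*\<rho>\<^sup>2) + u*u"
      by (simp add: algebra_simps)
    have "u*(g*\<rho>\<^sup>2) \<le> (1/4)*(g*\<rho>\<^sup>2)" using u1 gr by (rule mult_right_mono)
    moreover have "0 \<le> u*u" by simp
    moreover have "g/4*\<rho>\<^sup>2 = (g*\<rho>\<^sup>2)/4" by simp
    ultimately show ?thesis using e u2 gr by linarith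
  qed
  ultimately show "1 \<le> (1 + g*\<rho>\<^sup>2 - K*\<rho>^3) * (1 - K*\<rho>^3)^n" by linarith
qed


lemma prod_if_one:
  fixes B A :: real
  assumes "finite J" "j0 \<in> J"
  shows "(\<Prod>j\<in>J. (if j = j0 then B else A)) = B * A^(card J - 1)"
proof -
  have "(\<Prod>j\<in>J. (if j = j0 then B else A)) = B * (\<Prod>j\<in>J-{j0}. (if j = j0 then B else A))"
    using prod.remove[OF assms, of "\<lambda>j. if j = j0 then B else A"] by simp
  also have "(\<Prod>j\<in>J-{j0}. (if j = j0 then B else A)) = (\<Prod>j\<in>J-{j0}. A)"
    by (rule prod.cong) auto
  also have "\<dots> = A^(card J - 1)" using assms by (simp add: card_Diff_singleton)
  finally show ?thesis .
qed

lemma lin1: "(x::real) < A/2 \<Longrightarrow> A \<le> B + x \<Longrightarrow> A/2 \<le> B" by linarith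
lemma lin2: "(x::real) < A/2 \<Longrightarrow> B \<le> A + x \<Longrightarrow> B \<le> A + A/2" by linarith

lemma local_min_axis:
  assumes bpos: "\<forall>j\<in>{1..h}. b j > 0" and j0: "j0 \<in> {1..h}" and aj0: "a j0 \<noteq> r"
    and e1: "e1 > 0"
    and psimin: "\<forall>u. \<bar>u - r\<bar> < e1 \<longrightarrow> (\<Prod>j\<in>{1..h}. ((b j)\<^sup>2+(r-a j)\<^sup>2)^3) \<le> (\<Prod>j\<in>{1..h}. ((b j)\<^sup>2+(u-a j)\<^sup>2)^3)"
  shows "local_min_at (Ffun h a b) (pt3 0 r)"
proof -
  define J where "J = {1..h::nat}"
  have finJ: "finite J" unfolding J_def by simp
  have j0J: "j0 \<in> J" using j0 unfolding J_def .
  have cardJ: "card J = h" unfolding J_def by simp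
  have hpos: "h \<ge> 1" using j0 by simp
  have bJ: "\<And>j. j \<in> J \<Longrightarrow> b j > 0" using bpos unfolding J_def by auto
  define \<delta> where "\<delta> = \<bar>r - a j0\<bar>/2"
  have dpos: "\<delta> > 0" unfolding \<delta>_def using aj0 by simp
  define M where "M = (b j0)\<^sup>2 + (\<bar>r - a j0\<bar> + \<delta>)\<^sup>2"
  have Mpos: "M > 0" unfolding M_def using bJ[OF j0J] by (simp add: add_pos_nonneg)
  define g where "g = 3*\<delta>\<^sup>2/M\<^sup>2"
  have gpos: "g > 0" unfolding g_def using dpos Mpos by simp
  define K where "K = (\<Sum>j\<in>J. 2/(b j)^3)"
  have Kj: "2/(b j)^3 \<le> K" if "j \<in> J" for j
    unfolding K_def using finJ that by (intro member_le_sum) (auto dest: bJ)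
  have K0: "K \<ge> 0" using Kj[OF j0J] bJ[OF j0J] by (smt (verit) divide_nonneg_pos zero_less_power)
  define m where "m = real h * K"
  have m0: "m \<ge> 0" unfolding m_def using K0 by simp
  define \<rho>0 where "\<rho>0 = min 1 (min (g/(4*(m+1))) (1/(4*(m+1))))"
  have r0pos: "\<rho>0 > 0" unfolding \<rho>0_def using gpos m0 by simp
  define e where "e = min e1 (min \<delta> \<rho>0)"
  have epos: "e > 0" unfolding e_def using e1 dpos r0pos by simp
  show ?thesis unfolding local_min_at_def
  proof (intro exI[of _ e] conjI allI impI epos)
    fix y assume dy: "dist y (pt3 0 r) < e"
    define X where "X = y$1"
    define Y where "Y = y$2"
    define t where "t = y$3"
    define p where "p = X\<^sup>2+Y\<^sup>2"
    define \<rho> where "\<rho> = sqrt p"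
    have p0: "p \<ge> 0" unfolding p_def by simp
    have rho0: "\<rho> \<ge> 0" unfolding \<rho>_def using p0 by simp
    have rho2: "\<rho>\<^sup>2 = p" unfolding \<rho>_def by (rule real_sqrt_pow2[OF p0])
    have nrm: "(norm (y - pt3 0 r))\<^sup>2 = p + (t - r)\<^sup>2"
      by (simp add: norm3 X_def Y_def t_def p_def)
    have dn: "norm (y - pt3 0 r) < e" using dy by (simp add: dist_norm)
    have "\<rho> \<le> norm (y - pt3 0 r)"
    proof -
      have "\<rho> \<le> sqrt ((norm (y - pt3 0 r))\<^sup>2)" unfolding \<rho>_def nrm by (rule real_sqrt_le_mono) simp
      then show ?thesis by simp
    qed
    then have rho_e: "\<rho> < e" using dn by linarith
    have "\<bar>t - r\<bar> \<le> norm (y - pt3 0 r)"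
    proof -
      have "sqrt ((t - r)\<^sup>2) \<le> sqrt ((norm (y - pt3 0 r))\<^sup>2)" unfolding nrm
        by (rule real_sqrt_le_mono) (simp add: p0)
      then show ?thesis by simp
    qed
    then have t_e: "\<bar>t - r\<bar> < e" using dn by linarith
    have t_e1: "\<bar>t - r\<bar> < e1" and t_d: "\<bar>t - r\<bar> < \<delta>" using t_e unfolding e_def by auto
    have rho_r0: "\<rho> < \<rho>0" using rho_e unfolding e_def by auto
    have rho1: "\<rho> \<le> 1" using rho_r0 unfolding \<rho>0_def by auto
    have mr: "m * \<rho> \<le> (m+1) * \<rho>0"
      using rho_r0 rho0 m0 by (intro mult_mono) auto
    have a1: "(m+1) * \<rho>0 \<le> g/4"
    proof -
      have "(m+1) * \<rho>0 \<le> (m+1) * (g/(4*(m+1)))" unfolding \<rho>0_def using m0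
        by (intro mult_left_mono) auto
      also have "\<dots> = g/4" using m0 by (simp add: field_simps)
      finally show ?thesis .
    qed
    have a2: "(m+1) * \<rho>0 \<le> 1/4"
    proof -
      have "(m+1) * \<rho>0 \<le> (m+1) * (1/(4*(m+1)))" unfolding \<rho>0_def using m0
        by (intro mult_left_mono) auto
      also have "\<dots> = 1/4" using m0 by (simp add: field_simps)
      finally show ?thesis .
    qed
    have hh: "real (h - 1) + 1 = real h" using hpos by simp
    have sc1: "(real (h-1) + 1) * K * \<rho> \<le> g/4" unfolding hh using mr a1 unfolding m_def by simp
    have sc2: "(real (h-1) + 1) * K * \<rho> \<le> 1/4" unfolding hh using mr a2 unfolding m_def by simp
    note sc = scalar_ineq[OF rho0 rho1 gpos K0 sc1 sc2]
    define R where "R j = (b j)\<^sup>2 + (t - a j)\<^sup>2" for j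
    define c where "c j = (if j = j0 then 1 + g*\<rho>\<^sup>2 - K*\<rho>^3 else 1 - K*\<rho>^3)" for j
    have Fy: "Ffun h a b y = (\<Prod>j\<in>J. gam (b j) X Y (t - a j))"
      unfolding Ffun_eq J_def X_def Y_def t_def ..
    have Fx: "Ffun h a b (pt3 0 r) = (\<Prod>j\<in>J. ((b j)\<^sup>2+(r-a j)\<^sup>2)^3)"
      unfolding Ffun_eq J_def by (simp add: gam_axis)
    have lb: "0 \<le> R j^3 * c j \<and> R j^3 * c j \<le> gam (b j) X Y (t - a j)" if jJ: "j \<in> J" for j
    proof
      have bj: "b j > 0" using bJ[OF jJ] .
      have R0: "R j \<ge> 0" unfolding R_def by simp
      have c0: "c j \<ge> 0" unfolding c_def using sc(1,2) by simp
      show "0 \<le> R j^3 * c j" using R0 c0 by simp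
      have gl: "gam (b j) X Y (t - a j) \<ge> R j^3 + 3*(t - a j)\<^sup>2*R j*p - 2*(b j)^3*\<rho>^3"
        using gam_lb[OF bj, of "t - a j" X Y] unfolding R_def p_def[symmetric] \<rho>_def[symmetric] by simp
      have bR: "(b j)\<^sup>2 \<le> R j" unfolding R_def by simp
      have b6: "((b j)\<^sup>2)^3 \<le> R j^3" using bR by (rule power_mono) simp
      have "2*(b j)^3 = (2/(b j)^3) * ((b j)\<^sup>2)^3" using bj
        by (simp add: field_simps power2_eq_square power3_eq_cube eval_nat_numeral)
      also have "\<dots> \<le> K * R j^3" using Kj[OF jJ] b6 K0 bj by (intro mult_mono) auto
      finally have bK: "2*(b j)^3 \<le> K * R j^3" .
      have bK2: "2*(b j)^3*\<rho>^3 \<le> K * R j^3 * \<rho>^3" using bK rho0 by (simp add: mult_right_mono)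
      show "R j^3 * c j \<le> gam (b j) X Y (t - a j)"
      proof (cases "j = j0")
        case False
        have "0 \<le> 3*(t - a j)\<^sup>2*R j*p" using R0 p0 by simp
        then show ?thesis using False gl bK2 unfolding c_def by (simp add: algebra_simps)
      next
        case True
        have tri1: "\<bar>r - a j0\<bar> \<le> \<bar>t - a j0\<bar> + \<bar>t - r\<bar>"
          using abs_triangle_ineq[of "t - a j0" "r - t"] by (simp add: abs_minus_commute)
        have tri2: "\<bar>t - a j0\<bar> \<le> \<bar>r - a j0\<bar> + \<bar>t - r\<bar>"
          using abs_triangle_ineq[of "r - a j0" "t - r"] by simp
        have Dd: "\<delta> \<le> \<bar>t - a j\<bar>" using lin1[OF t_d[unfolded \<delta>_def] tri1] unfolding True \<delta>_def .
        have Dd2: "\<delta>\<^sup>2 \<le> (t - a j)\<^sup>2" using Dd dpos by (metis abs_of_pos power2_abs abs_le_square_iff abs_ge_zero order_trans)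
        have DM: "\<bar>t - a j\<bar> \<le> \<bar>r - a j0\<bar> + \<delta>" using lin2[OF t_d[unfolded \<delta>_def] tri2] unfolding True \<delta>_def .
        have "(t - a j)\<^sup>2 \<le> (\<bar>r - a j0\<bar> + \<delta>)\<^sup>2" using DM by (metis abs_le_square_iff abs_ge_zero add_nonneg_nonneg dpos less_imp_le abs_of_nonneg)
        then have RM: "R j \<le> M" unfolding R_def M_def using True by simp
        have "g * (R j)\<^sup>2 \<le> g * M\<^sup>2" using RM R0 gpos by (intro mult_left_mono power_mono) auto
        also have "\<dots> = 3*\<delta>\<^sup>2" unfolding g_def using Mpos by simp
        finally have gR: "g * (R j)\<^sup>2 \<le> 3*\<delta>\<^sup>2" .
        have "g * R j^3 * p = (g * (R j)\<^sup>2) * (R j * p)" by (simp add: power2_eq_square power3_eq_cube)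
        also have "\<dots> \<le> (3*(t - a j)\<^sup>2) * (R j * p)" using gR Dd2 R0 p0
          by (intro mult_right_mono) auto
        finally have gRp: "g * R j^3 * p \<le> 3*(t - a j)\<^sup>2*R j*p" by (simp add: mult.assoc)
        show ?thesis using True gl bK2 gRp rho2 unfolding c_def by (simp add: algebra_simps)
      qed
    qed
    have "(\<Prod>j\<in>J. R j^3 * c j) \<le> Ffun h a b y" unfolding Fy by (rule prod_mono) (use lb in blast)
    moreover have "(\<Prod>j\<in>J. R j^3 * c j) = (\<Prod>j\<in>J. R j^3) * ((1 + g*\<rho>\<^sup>2 - K*\<rho>^3) * (1 - K*\<rho>^3)^(h-1))"
      unfolding prod.distrib c_def prod_if_one[OF finJ j0J] cardJ ..
    moreover have "(\<Prod>j\<in>J. R j^3) \<ge> Ffun h a b (pt3 0 r)"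
      unfolding Fx R_def using psimin t_e1 unfolding J_def by blast
    moreover have "(\<Prod>j\<in>J. R j^3) \<ge> 0" unfolding R_def by (simp add: prod_nonneg)
    ultimately show "Ffun h a b (pt3 0 r) \<le> Ffun h a b y"
      using sc(3) by (smt (verit) mult_left_mono mult_cancel_left1)
  qed
qed


abbreviation cm :: "real poly \<Rightarrow> complex poly" where "cm p \<equiv> map_poly complex_of_real p"

lemma cm_mult: "cm (p*q) = cm p * cm q"
  by (simp add: poly_eq_iff coeff_map_poly coeff_mult)

lemma cm_add: "cm (p+q) = cm p + cm q"
  by (simp add: poly_eq_iff coeff_map_poly)

lemma cm_smult: "cm (smult c p) = smult (of_real c) (cm p)"
  by (rule map_poly_smult) auto

lemma cm_pCons: "cm (pCons c p) = pCons (of_real c) (cm p)"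
  by (rule map_poly_pCons) auto

lemma cm_prod: "cm (\<Prod>i\<in>S. f i) = (\<Prod>i\<in>S. cm (f i))"
  by (induction S rule: infinite_finite_induct) (auto simp: cm_mult)

lemma poly_cm_lin: "poly (cm [:-x, 1:]) z = z - of_real x"
  by (simp add: cm_pCons)

lemma dist_pairs:
  fixes h j k :: nat and r s a b :: "nat \<Rightarrow> real" and P :: "real poly" and c \<kappa> :: real
  assumes derivP: "pderiv P = smult c ([:- r h, 1:] * (\<Prod>j\<in>{1..h-1}. [:- r j, 1:] * [:- s j, 1:]))"
    and cpos: "c > 0" and bpos: "\<forall>j\<in>{1..h}. b j > 0"
    and factP: "P = smult \<kappa> (\<Prod>j\<in>{1..h}. [:- a j, 1:]^2 + [:(b j)^2:])"
    and jk: "j \<in> {1..h}" "k \<in> {1..h}" "j \<noteq> k" and ab: "a j = a k" "b j = b k"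
  shows False
proof -
  define S where "S = {1..h::nat}"
  define q where "q i = [:- a i, 1:]^2 + [:(b i)^2:]" for i
  define W where "W = (\<Prod>i\<in>S-{j}-{k}. q i)"
  have fin: "finite S" unfolding S_def by simp
  have "(\<Prod>i\<in>S. q i) = q j * (\<Prod>i\<in>S-{j}. q i)"
    using prod.remove[OF fin, of j q] jk unfolding S_def by simp
  also have "(\<Prod>i\<in>S-{j}. q i) = q k * W"
    using prod.remove[of "S-{j}" k q] jk fin unfolding S_def W_def by simp
  finally have "(\<Prod>i\<in>S. q i) = q j * (q j * W)" using ab unfolding q_def by simp
  then have PP: "P = smult \<kappa> (q j * (q j * W))" using factP unfolding S_def q_def by simp
  have dP: "pderiv P = smult \<kappa> (q j * (pderiv (q j * W) + pderiv (q j) * W))"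
    unfolding PP by (simp add: pderiv_smult pderiv_mult algebra_simps)
  define z where "z = Complex (a j) (b j)"
  have qz: "poly (cm (q j)) z = 0"
    unfolding q_def cm_add power2_eq_square cm_mult
    by (simp add: cm_pCons z_def complex_eq_iff power2_eq_square)
  have "poly (cm (pderiv P)) z = 0"
    unfolding dP cm_smult cm_mult by (simp add: qz)
  moreover have "poly (cm (pderiv P)) z \<noteq> 0"
  proof -
    have bj: "b j \<noteq> 0" using bpos jk(1) by (metis less_irrefl)
    have nz: "z - of_real x \<noteq> 0" for x using bj by (simp add: z_def complex_eq_iff)
    have "poly (cm (pderiv P)) z = of_real c * ((z - of_real (r h)) *
         (\<Prod>l\<in>{1..h-1}. (z - of_real (r l)) * (z - of_real (s l))))"
      unfolding derivP by (simp only: cm_smult cm_mult cm_prod poly_smult poly_mult poly_prod poly_cm_lin)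
    then show ?thesis using nz cpos by (simp add: prod_zero_iff)
  qed
  ultimately show False by simp
qed

lemma pt3_eq: "pt3 z t = pt3 z' t' \<Longrightarrow> z = z' \<and> t = t'"
  by (metis pt3_nth complex_eqI)

lemma norm_xi: "norm xi = 1"
  unfolding xi_def by simp

lemma xi_pow_inj: "i \<in> {1..3::nat} \<Longrightarrow> i' \<in> {1..3} \<Longrightarrow> xi^i = xi^i' \<Longrightarrow> i = i'"
proof -
  assume i: "i \<in> {1..3::nat}" and i': "i' \<in> {1..3}" and e: "xi^i = xi^i'"
  have d12: "xi^1 \<noteq> xi^2" unfolding xi2 by (simp add: xi_val complex_eq_iff)
  have d13: "xi^1 \<noteq> xi^3" unfolding xi3 by (simp add: xi_val complex_eq_iff)
  have d23: "xi^2 \<noteq> xi^3" unfolding xi2 xi3 by (simp add: complex_eq_iff)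
  have "i = 1 \<or> i = 2 \<or> i = 3" "i' = 1 \<or> i' = 2 \<or> i' = 3" using i i' by auto
  then show ?thesis using e d12 d13 d23 by (metis)
qed


lemma r_mono:
  fixes h i j :: nat and r s :: "nat \<Rightarrow> real"
  assumes il: "\<forall>j\<in>{1..h-1}. r j < s j \<and> s j < r (j + 1)" and i: "1 \<le> i" and ij: "i < j" and jh: "j \<le> h"
  shows "(r i :: real) < r j"
proof -
  have step: "r l < r (Suc l)" if "1 \<le> l" "Suc l \<le> h" for l
  proof -
    have "l \<in> {1..h-1}" using that by simp
    then have "r l < s l \<and> s l < r (l + 1)" using il by blast
    then show ?thesis by simp
  qed
  have main: "\<forall>j. i < j \<longrightarrow> j \<le> h \<longrightarrow> r i < r j"
  proof (intro allI)
    fix j show "i < j \<longrightarrow> j \<le> h \<longrightarrow> r i < r j"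
    proof (induction j)
      case 0 then show ?case by simp
    next
      case (Suc j)
      show ?case
      proof (intro impI)
        assume a: "i < Suc j" "Suc j \<le> h"
        show "r i < r (Suc j)"
        proof (cases "i = j")
          case True then show ?thesis using step[of j] i a by simp
        next
          case False
          then have "i < j" using a by simp
          then have "r i < r j" using Suc.IH a by simp
          moreover have "r j < r (Suc j)" using step[of j] i \<open>i < j\<close> a by simp
          ultimately show ?thesis by simp
        qed
      qed
    qed
  qed
  then show ?thesis using ij jh by blast
qed

lemma r_le:
  fixes h i j :: nat and r s :: "nat \<Rightarrow> real"
  assumes il: "\<forall>j\<in>{1..h-1}. r j < s j \<and> s j < r (j + 1)" and a: "1 \<le> i" "i \<le> j" "j \<le> h"
  shows "r i \<le> r j"
proof (cases "i = j")
  case True then show ?thesis by simp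
next
  case False then have "i < j" using a by simp
  then show ?thesis using r_mono[OF il a(1) _ a(3)] by simp
qed

lemma s_r:
  fixes h i j :: nat and r s :: "nat \<Rightarrow> real"
  assumes il: "\<forall>j\<in>{1..h-1}. r j < s j \<and> s j < r (j + 1)" and "1 \<le> i" "i < j" "j \<le> h"
  shows "(s i::real) < r j"
proof -
  have "i \<in> {1..h-1}" using assms(2-4) by simp
  then have "s i < r (i+1)" using il by blast
  moreover have "r (i+1) \<le> r j" using r_le[OF il, of "i+1" j] assms(2-4) by simp
  ultimately show ?thesis by simp
qed

lemma r_s:
  fixes h i j :: nat and r s :: "nat \<Rightarrow> real"
  assumes il: "\<forall>j\<in>{1..h-1}. r j < s j \<and> s j < r (j + 1)" and "1 \<le> i" "i \<le> j" "j \<le> h - 1"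
  shows "(r i::real) < s j"
proof -
  have "j \<in> {1..h-1}" using assms(2-4) by simp
  then have "r j < s j" using il by blast
  moreover have "r i \<le> r j" using r_le[OF il, of i j] assms(2-4) by simp
  ultimately show ?thesis by simp
qed

lemma s_s:
  fixes h i j :: nat and r s :: "nat \<Rightarrow> real"
  assumes il: "\<forall>j\<in>{1..h-1}. r j < s j \<and> s j < r (j + 1)" and "1 \<le> i" "i < j" "j \<le> h - 1"
  shows "(s i::real) < s j"
proof -
  have "s i < r j" using s_r[OF il, of i j] assms(2-4) by simp
  moreover have "r j < s j" using r_s[OF il, of j j] assms(2-4) by simp
  ultimately show ?thesis by simp
qed

lemma Qpos:
  assumes "finite S" "\<forall>l\<in>S. ((x::real) < r l \<and> x < s l) \<or> (r l < x \<and> s l < x)"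
  shows "poly (\<Prod>l\<in>S. [:- r l, 1:] * [:- s l, 1:]) x > 0"
  unfolding poly_prod
proof (intro prod_pos)
  fix l assume l: "l \<in> S"
  have e: "poly ([:- r l, 1:] * [:- s l, 1:]) x = (x - r l) * (x - s l)" by (simp add: algebra_simps)
  show "0 < poly ([:- r l, 1:] * [:- s l, 1:]) x"
    unfolding e
  proof -
    have "(x < r l \<and> x < s l) \<or> (r l < x \<and> s l < x)" using assms(2) l by blast
    then show "0 < (x - r l) * (x - s l)"
    proof
      assume "x < r l \<and> x < s l" then show ?thesis by (intro mult_neg_neg) auto
    next
      assume "r l < x \<and> s l < x" then show ?thesis by (intro mult_pos_pos) auto
    qed
  qed
qed

lemma poly_lin: "poly [:-a, 1:] (x::real) = x - a" by (simp add: algebra_simps)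

lemma root_deriv: "poly (pderiv ([:-z,1:] * p)) (z::real) = poly p z"
proof -
  have "poly (pderiv ([:-z,1:] * p)) z = poly [:-z,1:] z * poly (pderiv p) z + poly (pderiv [:-z,1:]) z * poly p z"
    by (simp only: pderiv_mult poly_add poly_mult ac_simps)
  also have "\<dots> = poly p z" by (simp add: pderiv_pCons)
  finally show ?thesis .
qed


lemma crit_r:
  fixes h j :: nat and r s :: "nat \<Rightarrow> real" and P :: "real poly" and c :: real
  assumes il: "\<forall>j\<in>{1..h-1}. r j < s j \<and> s j < r (j + 1)"
    and derivP: "pderiv P = smult c ([:- r h, 1:] * (\<Prod>j\<in>{1..h-1}. [:- r j, 1:] * [:- s j, 1:]))"
    and cpos: "c > 0" and j: "j \<in> {1..h}"
  shows "poly (pderiv P) (r j) = 0 \<and> poly (pderiv (pderiv P)) (r j) > 0"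
proof -
  define Q where "Q = (\<Prod>l\<in>{1..h-1}. [:- r l, 1:] * [:- s l, 1:])"
  obtain M where LM: "[:- r h, 1:] * Q = [:- r j, 1:] * M" and Mpos: "poly M (r j) > 0"
  proof (cases "j = h")
    case True
    have "poly Q (r j) > 0" unfolding Q_def
      by (rule Qpos) (use True j s_r[OF il] r_mono[OF il] in auto)
    then show ?thesis using that[of Q] True by simp
  next
    case False
    then have jJ: "j \<in> {1..h-1}" using j by auto
    define Qj where "Qj = (\<Prod>l\<in>{1..h-1}-{j}. [:- r l, 1:] * [:- s l, 1:])"
    have QQ: "Q = ([:- r j, 1:] * [:- s j, 1:]) * Qj"
      unfolding Q_def Qj_def by (rule prod.remove) (use jJ in auto)
    have e: "[:- r h, 1:] * Q = [:- r j, 1:] * ([:- r h, 1:] * [:- s j, 1:] * Qj)"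
      unfolding QQ by (simp only: ac_simps)
    have q: "poly Qj (r j) > 0" unfolding Qj_def
    proof (rule Qpos, simp, intro ballI)
      fix l assume l: "l \<in> {1..h-1}-{j}"
      show "(r j < r l \<and> r j < s l) \<or> (r l < r j \<and> s l < r j)"
      proof (cases "l < j")
        case True then show ?thesis using l j r_mono[OF il, of l j] s_r[OF il, of l j] by auto
      next
        case False then have "j < l" using l by auto
        then show ?thesis using l j r_mono[OF il, of j l] r_s[OF il, of j l] by auto
      qed
    qed
    have "r j < r h" using r_mono[OF il, of j h] j False by auto
    moreover have "r j < s j" using il jJ by blast
    ultimately have "poly ([:- r h, 1:] * [:- s j, 1:] * Qj) (r j) > 0" using q
      unfolding poly_mult poly_lin by (intro mult_pos_pos mult_neg_neg) auto
    then show ?thesis using that e by blast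
  qed
  have "poly (pderiv P) (r j) = 0" unfolding derivP Q_def[symmetric] LM by simp
  moreover have "poly (pderiv (pderiv P)) (r j) = c * poly M (r j)"
    unfolding derivP Q_def[symmetric] LM pderiv_smult by (simp only: poly_smult root_deriv)
  ultimately show ?thesis using cpos Mpos by simp
qed

lemma crit_s:
  fixes h j :: nat and r s :: "nat \<Rightarrow> real" and P :: "real poly" and c :: real
  assumes il: "\<forall>j\<in>{1..h-1}. r j < s j \<and> s j < r (j + 1)"
    and derivP: "pderiv P = smult c ([:- r h, 1:] * (\<Prod>j\<in>{1..h-1}. [:- r j, 1:] * [:- s j, 1:]))"
    and cpos: "c > 0" and jJ: "j \<in> {1..h-1}"
  shows "poly (pderiv P) (s j) = 0 \<and> poly (pderiv (pderiv P)) (s j) < 0"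
proof -
  define Q where "Q = (\<Prod>l\<in>{1..h-1}. [:- r l, 1:] * [:- s l, 1:])"
  define Qj where "Qj = (\<Prod>l\<in>{1..h-1}-{j}. [:- r l, 1:] * [:- s l, 1:])"
  have QQ: "Q = ([:- r j, 1:] * [:- s j, 1:]) * Qj"
    unfolding Q_def Qj_def by (rule prod.remove) (use jJ in auto)
  have LM: "[:- r h, 1:] * Q = [:- s j, 1:] * ([:- r h, 1:] * [:- r j, 1:] * Qj)"
    unfolding QQ by (simp only: ac_simps)
  have q: "poly Qj (s j) > 0" unfolding Qj_def
  proof (rule Qpos, simp, intro ballI)
    fix l assume l: "l \<in> {1..h-1}-{j}"
    show "(s j < r l \<and> s j < s l) \<or> (r l < s j \<and> s l < s j)"
    proof (cases "l < j")
      case True then show ?thesis using l jJ r_s[OF il, of l j] s_s[OF il, of l j] by auto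
    next
      case False then have "j < l" using l by auto
      then show ?thesis using l jJ s_r[OF il, of j l] s_s[OF il, of j l] by auto
    qed
  qed
  have "s j < r h" using s_r[OF il, of j h] jJ by auto
  moreover have "r j < s j" using il jJ by blast
  ultimately have Mneg: "poly ([:- r h, 1:] * [:- r j, 1:] * Qj) (s j) < 0" using q
    unfolding poly_mult poly_lin by (intro mult_neg_pos mult_neg_pos) auto
  have "poly (pderiv P) (s j) = 0" unfolding derivP Q_def[symmetric] LM by simp
  moreover have "poly (pderiv (pderiv P)) (s j) = c * poly ([:- r h, 1:] * [:- r j, 1:] * Qj) (s j)"
    unfolding derivP Q_def[symmetric] LM pderiv_smult by (simp only: poly_smult root_deriv)
  ultimately show ?thesis using cpos Mneg by (simp add: mult_pos_neg)
qed


lemma exists_a_ne: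
  fixes h :: nat and a b :: "nat \<Rightarrow> real" and P :: "real poly" and \<kappa> t x1 x2 :: real
  assumes factP: "P = smult \<kappa> (\<Prod>j\<in>{1..h}. [:- a j, 1:]^2 + [:(b j)^2:])"
    and kpos: "\<kappa> > 0" and bpos: "\<forall>j\<in>{1..h}. b j > 0" and h1: "h \<ge> 1"
    and x12: "x1 \<noteq> x2" "poly (pderiv P) x1 = 0" "poly (pderiv P) x2 = 0"
  shows "\<exists>j\<in>{1..h}. a j \<noteq> t"
proof (rule ccontr)
  assume "\<not> ?thesis"
  then have at: "\<And>j. j \<in> {1..h} \<Longrightarrow> a j = t" by auto
  define S where "S = {1..h}"
  define q where "q j = [:-t,1:]^2 + [:(b j)^2:]" for j
  have P: "P = smult \<kappa> (\<Prod>j\<in>S. q j)"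
    unfolding factP q_def S_def by (intro arg_cong[where f="smult \<kappa>"] prod.cong) (auto simp: at)
  have dq: "poly (pderiv (q j)) x = 2*(x - t)" for j x
    unfolding q_def power2_eq_square by (simp add: pderiv_add pderiv_mult pderiv_pCons algebra_simps)
  have pq: "poly (q j) x > 0" if "j \<in> S" for j x
  proof -
    have "b j > 0" using bpos that unfolding S_def by auto
    then show ?thesis unfolding q_def by (simp add: add_nonneg_pos)
  qed
  have fin: "finite S" and ne: "S \<noteq> {}" unfolding S_def using h1 by auto
  have sp: "(\<Sum>j\<in>S. \<Prod>l\<in>S-{j}. poly (q l) x) > 0" for x
    using fin ne by (intro sum_pos prod_pos) (auto intro: pq)
  have dP0: "poly (pderiv P) x = \<kappa> * (\<Sum>j\<in>S. (\<Prod>l\<in>S-{j}. poly (q l) x) * (2*(x - t)))" for x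
    unfolding P pderiv_smult pderiv_prod poly_smult poly_sum poly_mult poly_prod dq ..
  have dP: "poly (pderiv P) x = \<kappa> * (2*(x - t)) * (\<Sum>j\<in>S. \<Prod>l\<in>S-{j}. poly (q l) x)" for x
    unfolding dP0 sum_distrib_right[symmetric] by (simp add: mult.commute mult.left_commute)
  have "x1 \<noteq> t \<or> x2 \<noteq> t" using x12 by auto
  then show False
  proof
    assume "x1 \<noteq> t" then show False using dP[of x1] x12 kpos sp[of x1] by simp
  next
    assume "x2 \<noteq> t" then show False using dP[of x2] x12 kpos sp[of x2] by simp
  qed
qed

lemma poly_q: "poly ([:- a, 1:]^2 + [:c:]) (u::real) = c + (u - a)\<^sup>2"
  by (simp add: power2_eq_square algebra_simps)

lemma F_axis:
  fixes h :: nat and a b :: "nat \<Rightarrow> real" and P :: "real poly" and \<kappa> :: real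
  assumes factP: "P = smult \<kappa> (\<Prod>j\<in>{1..h}. [:- a j, 1:]^2 + [:(b j)^2:])" and k: "\<kappa> \<noteq> 0"
  shows "Ffun h a b (pt3 0 u) = (poly P u)^3 / \<kappa>^3"
    and "Ffun h a b (pt3 0 u) = (\<Prod>j\<in>{1..h}. ((b j)\<^sup>2 + (u - a j)\<^sup>2)^3)"
    and "poly P u = \<kappa> * (\<Prod>j\<in>{1..h}. (b j)\<^sup>2 + (u - a j)\<^sup>2)"
proof -
  show pP: "poly P u = \<kappa> * (\<Prod>j\<in>{1..h}. (b j)\<^sup>2 + (u - a j)\<^sup>2)"
    unfolding factP poly_smult poly_prod poly_q ..
  show F: "Ffun h a b (pt3 0 u) = (\<Prod>j\<in>{1..h}. ((b j)\<^sup>2 + (u - a j)\<^sup>2)^3)"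
    unfolding Ffun_eq by (simp add: gam_axis)
  show "Ffun h a b (pt3 0 u) = (poly P u)^3 / \<kappa>^3"
    unfolding F pP using k by (simp add: power_mult_distrib prod_power_distrib)
qed

lemma Ffun_nonneg: "Ffun h a b y \<ge> 0"
  unfolding Ffun_def by (intro prod_nonneg) auto

lemma Ffun_zero: "Ffun h a b y = 0 \<longleftrightarrow> y \<in> (\<lambda>(j, i). wpt a b j i) ` ({1..h} \<times> {1..3})"
  unfolding Ffun_def by (auto simp: prod_zero_iff)

lemma prod_UNIV3: "prod f (UNIV::3 set) = f 1 * f 2 * f 3"
  unfolding UNIV_3 by (simp add: mult.assoc)

lemma det_diag3:
  fixes H :: "'a::comm_ring_1^3^3"
  assumes "\<And>i k. i \<noteq> k \<Longrightarrow> H$i$k = 0"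
  shows "det H = H$1$1 * H$2$2 * H$3$3"
proof -
  have "det H = prod (\<lambda>i. H$i$i) UNIV" by (rule det_diagonal) (rule assms)
  then show ?thesis by (simp only: prod_UNIV3)
qed

lemma charpoly_diag3:
  fixes H :: "real^3^3"
  assumes "\<And>i k. i \<noteq> k \<Longrightarrow> H$i$k = 0"
  shows "charpoly H = [:-H$1$1,1:] * [:-H$2$2,1:] * [:-H$3$3,1:]"
proof -
  have "charpoly H = (\<Prod>i\<in>UNIV. [:0,1:] - [:H$i$i:])"
    unfolding charpoly_def by (subst det_diagonal) (auto simp: assms)
  also have "\<dots> = ([:0,1:] - [:H$1$1:]) * ([:0,1:] - [:H$2$2:]) * ([:0,1:] - [:H$3$3:])"
    by (rule prod_UNIV3)
  also have "[:0,1:] - [:x:] = [:-x, 1::real:]" for x by simp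
  finally show ?thesis by simp
qed

lemma negidx3:
  fixes H :: "real^3^3"
  assumes off: "\<And>i k. i \<noteq> k \<Longrightarrow> H$i$k = 0" and d: "H$1$1 = l" "H$2$2 = l" "H$3$3 = m"
    and l: "l > 0" and m: "m < 0"
  shows "(\<Sum>e\<in>{e. e < 0 \<and> poly (charpoly H) e = 0}. order e (charpoly H)) = 1"
proof -
  have cp: "charpoly H = [:-l,1:] * [:-l,1:] * [:-m,1:]"
    using charpoly_diag3[OF off] d by simp
  have set: "{e. e < 0 \<and> poly (charpoly H) e = 0} = {m}"
    unfolding cp poly_mult poly_lin using l m by auto
  have nz: "[:-l,1:] * [:-l,1:] * [:-m,1:] \<noteq> (0::real poly)" by simp
  have "poly [:-l,1:] m \<noteq> 0" using l m by simp
  then have o1: "order m [:-l,1:] = 0" using order_root[of "[:-l,1:]" m] by auto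
  have o2: "order m [:-m,1:] = 1" using order_power_n_n[of m 1] by simp
  have nz2: "[:-l,1:] * [:-l,1:] \<noteq> (0::real poly)" by simp
  have "order m ([:-l,1:] * [:-l,1:] * [:-m,1:]) = 1"
    using order_mult[OF nz, of m] order_mult[OF nz2, of m] o1 o2 by simp
  then have "order m (charpoly H) = 1" by (simp only: cp)
  then show ?thesis by (simp only: set sum.insert_remove finite.emptyI sum.empty Diff_empty empty_iff add_0_right) simp
qed


definition lam :: "nat \<Rightarrow> (nat\<Rightarrow>real) \<Rightarrow> (nat\<Rightarrow>real) \<Rightarrow> real \<Rightarrow> real" where
  "lam h a b t = (\<Sum>j\<in>{1..h}. 6*((b j)\<^sup>2+(t-a j)\<^sup>2)*(t-a j)\<^sup>2 *
        (\<Prod>l\<in>{1..h}-{j}. ((b l)\<^sup>2 + (t - a l)\<^sup>2)^3))"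

lemma lam_pos:
  assumes bpos: "\<forall>j\<in>{1..h}. b j > 0" and j0: "j0 \<in> {1..h}" "a j0 \<noteq> t"
  shows "lam h a b t > 0"
  unfolding lam_def
proof (rule sum_pos2[of _ j0])
  show "finite {1..h}" by simp
  show "j0 \<in> {1..h}" by (rule j0(1))
  have "b j0 > 0" using bpos j0 by auto
  then have "(b j0)\<^sup>2 + (t - a j0)\<^sup>2 > 0" by (simp add: add_pos_nonneg)
  moreover have "(t - a j0)\<^sup>2 > 0" using j0 by simp
  moreover have "(\<Prod>l\<in>{1..h}-{j0}. ((b l)\<^sup>2 + (t - a l)\<^sup>2)^3) > 0"
    using bpos by (intro prod_pos) (auto intro!: zero_less_power add_pos_nonneg)
  ultimately show "0 < 6*((b j0)\<^sup>2+(t-a j0)\<^sup>2)*(t-a j0)\<^sup>2 * (\<Prod>l\<in>{1..h}-{j0}. ((b l)\<^sup>2 + (t - a l)\<^sup>2)^3)"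
    by simp
  show "0 \<le> 6*((b j)\<^sup>2+(t-a j)\<^sup>2)*(t-a j)\<^sup>2 * (\<Prod>l\<in>{1..h}-{j}. ((b l)\<^sup>2 + (t - a l)\<^sup>2)^3)" for j
    by (intro mult_nonneg_nonneg prod_nonneg) auto
qed

lemma hess_struct:
  assumes P1: "poly (pderiv P) t = 0" and psi: "\<And>u. Ffun h a b (pt3 0 u) = (poly P u)^3 / k^3"
    and k: "k \<noteq> 0"
  shows "\<And>i j. i \<noteq> j \<Longrightarrow> hessian (Ffun h a b) (pt3 0 t) $ i $ j = 0"
    and "hessian (Ffun h a b) (pt3 0 t) $ 1 $ 1 = lam h a b t"
    and "hessian (Ffun h a b) (pt3 0 t) $ 2 $ 2 = lam h a b t"
    and "hessian (Ffun h a b) (pt3 0 t) $ 3 $ 3 = 3*(poly P t)^2 * poly (pderiv (pderiv P)) t / k^3"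
proof -
  show "hessian (Ffun h a b) (pt3 0 t) $ i $ j = 0" if "i \<noteq> j" for i j
  proof -
    have "\<not> (i = 3 \<and> j = 3)" using that by auto
    then show ?thesis using hess_axis[of i j h a b t] that unfolding hessian_def by simp
  qed
  show "hessian (Ffun h a b) (pt3 0 t) $ 1 $ 1 = lam h a b t"
    using hess_axis[of 1 1 h a b t] unfolding hessian_def lam_def by simp
  show "hessian (Ffun h a b) (pt3 0 t) $ 2 $ 2 = lam h a b t"
    using hess_axis[of 2 2 h a b t] unfolding hessian_def lam_def by simp
  show "hessian (Ffun h a b) (pt3 0 t) $ 3 $ 3 = 3*(poly P t)^2 * poly (pderiv (pderiv P)) t / k^3"
    using H33[OF psi k, of t] P1 unfolding hessian_def psi2_def by simp
qed


theorem proposition8p1: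
  fixes h :: nat and r s a b :: "nat \<Rightarrow> real" and P :: "real poly" and c \<kappa> :: real
  assumes h2: "h \<ge> 2"
    and interlace: "\<forall>j\<in>{1..h-1}. r j < s j \<and> s j < r (j + 1)"
    and degP: "degree P = 2 * h"
    and lcP: "lead_coeff P > 0"
    and Ppos: "\<forall>x. poly P x > 0"
    and cpos: "c > 0"
    and derivP: "pderiv P = smult c ([:- r h, 1:] * (\<Prod>j\<in>{1..h-1}. [:- r j, 1:] * [:- s j, 1:]))"
    and kpos: "\<kappa> > 0"
    and bpos: "\<forall>j\<in>{1..h}. b j > 0"
    and factP: "P = smult \<kappa> (\<Prod>j\<in>{1..h}. [:- a j, 1:]^2 + [:(b j)^2:])"
  shows "inj_on (\<lambda>(j, i). wpt a b j i) ({1..h} \<times> {1..3})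
    \<and> (\<forall>j\<in>{1..h}. local_min_at (Ffun h a b) (pt3 0 (r j))
          \<and> nondegenerate_critical_point (Ffun h a b) (pt3 0 (r j))
          \<and> \<not> global_min_at (Ffun h a b) (pt3 0 (r j)))
    \<and> (\<forall>j\<in>{1..h-1}. nondegenerate_critical_point (Ffun h a b) (pt3 0 (s j))
          \<and> negativity_index (Ffun h a b) (pt3 0 (s j)) = 1)
    \<and> {x. global_min_at (Ffun h a b) x} = (\<lambda>(j, i). wpt a b j i) ` ({1..h} \<times> {1..3})"
proof -
  let ?F = "Ffun h a b"
  let ?W = "(\<lambda>(j, i). wpt a b j i) ` ({1..h} \<times> {1..3})"
  have k0: "\<kappa> \<noteq> 0" using kpos by simp
  note psi = F_axis(1)[OF factP k0]
  note psiprod = F_axis(2)[OF factP k0]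
  have h1: "h \<ge> 1" using h2 by simp
  have one: "(1::nat) \<in> {1..h-1}" using h2 by simp
  have rs1: "r 1 \<noteq> s 1" using interlace one by fastforce
  have s1: "poly (pderiv P) (s 1) = 0" using crit_s[OF interlace derivP cpos one] by simp
  have r1: "poly (pderiv P) (r 1) = 0" using crit_r[OF interlace derivP cpos, of 1] h1 by simp
  have ane: "\<exists>j\<in>{1..h}. a j \<noteq> t" for t
    by (rule exists_a_ne[OF factP kpos bpos h1 rs1 r1 s1])
  have crit_gen: "nondegenerate_critical_point ?F (pt3 0 t) \<and> lam h a b t > 0"
    if P1: "poly (pderiv P) t = 0" and P2: "poly (pderiv (pderiv P)) t \<noteq> 0" for t
  proof -
    obtain j0 where j0: "j0 \<in> {1..h}" "a j0 \<noteq> t" using ane by blast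
    have lp: "lam h a b t > 0" by (rule lam_pos) (use bpos j0 in auto)
    note hs = hess_struct[OF P1 psi k0]
    have det: "det (hessian ?F (pt3 0 t)) = lam h a b t * lam h a b t * (3*(poly P t)^2 * poly (pderiv (pderiv P)) t / \<kappa>^3)"
      using det_diag3[of "hessian ?F (pt3 0 t)"] hs by simp
    have "poly P t \<noteq> 0" using Ppos by (metis less_irrefl)
    then have "det (hessian ?F (pt3 0 t)) \<noteq> 0" unfolding det using lp P2 k0 by simp
    moreover have "critical_point ?F (pt3 0 t)" by (rule crit_axis[OF psi k0 P1])
    ultimately show ?thesis using lp unfolding nondegenerate_critical_point_def by simp
  qed
  have inj: "inj_on (\<lambda>(j, i). wpt a b j i) ({1..h} \<times> {1..3})"
  proof (rule inj_onI, clarify)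
    fix j i j' i'
    assume j: "j \<in> {1..h}" "i \<in> {1..3::nat}" "j' \<in> {1..h}" "i' \<in> {1..3::nat}"
      and e: "wpt a b j i = wpt a b j' i'"
    from pt3_eq[OF e[unfolded wpt_def]]
    have e1: "xi ^ i * complex_of_real (b j) = xi ^ i' * complex_of_real (b j')" and e2: "a j = a j'"
      by auto
    have bj: "b j > 0" "b j' > 0" using bpos j by auto
    have "norm (xi ^ i * complex_of_real (b j)) = b j"
      using bj by (simp add: norm_mult norm_power norm_xi)
    moreover have "norm (xi ^ i' * complex_of_real (b j')) = b j'"
      using bj by (simp add: norm_mult norm_power norm_xi)
    ultimately have bb: "b j = b j'" using e1 by simp
    then have "xi ^ i = xi ^ i'" using e1 bj by simp
    then have ii: "i = i'" using xi_pow_inj j by blast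
    have "j = j'"
    proof (rule ccontr)
      assume "j \<noteq> j'"
      then show False using dist_pairs[OF derivP cpos bpos factP j(1) j(3) _ e2 bb] by blast
    qed
    then show "j = j' \<and> i = i'" using ii by simp
  qed
  have w11: "wpt a b 1 1 \<in> ?W" using h1 by force
  have Fw: "?F (wpt a b 1 1) = 0" using Ffun_zero w11 by blast
  have gmin: "{x. global_min_at ?F x} = ?W"
  proof
    show "{x. global_min_at ?F x} \<subseteq> ?W"
    proof
      fix x assume "x \<in> {x. global_min_at ?F x}"
      then have "?F x \<le> 0" using Fw unfolding global_min_at_def by (metis mem_Collect_eq)
      then have "?F x = 0" using Ffun_nonneg[of h a b x] by simp
      then show "x \<in> ?W" using Ffun_zero by blast
    qed
  next
    show "?W \<subseteq> {x. global_min_at ?F x}"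
    proof
      fix x assume "x \<in> ?W"
      then have "?F x = 0" using Ffun_zero by blast
      then show "x \<in> {x. global_min_at ?F x}" unfolding global_min_at_def using Ffun_nonneg by simp
    qed
  qed
  have rpart: "local_min_at ?F (pt3 0 (r j)) \<and> nondegenerate_critical_point ?F (pt3 0 (r j))
          \<and> \<not> global_min_at ?F (pt3 0 (r j))" if j: "j \<in> {1..h}" for j
  proof -
    note cr = crit_r[OF interlace derivP cpos j]
    have P2: "poly (pderiv (pderiv P)) (r j) \<noteq> 0" using cr by simp
    have nd: "nondegenerate_critical_point ?F (pt3 0 (r j))" using crit_gen[of "r j"] cr by simp
    obtain e1 where e1: "e1 > 0" "\<forall>u. \<bar>u - r j\<bar> < e1 \<longrightarrow> poly P (r j) \<le> poly P u"
      using local_min_1d[of "poly P" "poly (pderiv P)" "poly (pderiv (pderiv P)) (r j)" "r j", OF poly_DERIV poly_DERIV] cr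
      by auto
    have pm: "\<forall>u. \<bar>u - r j\<bar> < e1 \<longrightarrow> (\<Prod>l\<in>{1..h}. ((b l)\<^sup>2+(r j-a l)\<^sup>2)^3) \<le> (\<Prod>l\<in>{1..h}. ((b l)\<^sup>2+(u-a l)\<^sup>2)^3)"
    proof (intro allI impI)
      fix u assume "\<bar>u - r j\<bar> < e1"
      then have "poly P (r j) \<le> poly P u" using e1 by blast
      moreover have "poly P (r j) \<ge> 0" using Ppos by (metis less_imp_le)
      ultimately have "(poly P (r j))^3 \<le> (poly P u)^3" by (rule power_mono)
      then have "(poly P (r j))^3 / \<kappa>^3 \<le> (poly P u)^3 / \<kappa>^3" using kpos by (simp add: divide_right_mono)
      then show "(\<Prod>l\<in>{1..h}. ((b l)\<^sup>2+(r j-a l)\<^sup>2)^3) \<le> (\<Prod>l\<in>{1..h}. ((b l)\<^sup>2+(u-a l)\<^sup>2)^3)"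
        using psi psiprod by metis
    qed
    obtain j0 where j0: "j0 \<in> {1..h}" "a j0 \<noteq> r j" using ane by blast
    have lm: "local_min_at ?F (pt3 0 (r j))" by (rule local_min_axis[OF bpos _ _ e1(1) pm]) (use j0 in auto)
    have "?F (pt3 0 (r j)) > 0" unfolding psi using Ppos kpos by simp
    then have "\<not> global_min_at ?F (pt3 0 (r j))" unfolding global_min_at_def using Fw by (metis not_le)
    then show ?thesis using lm nd by simp
  qed
  have spart: "nondegenerate_critical_point ?F (pt3 0 (s j))
          \<and> negativity_index ?F (pt3 0 (s j)) = 1" if j: "j \<in> {1..h-1}" for j
  proof -
    note cs = crit_s[OF interlace derivP cpos j]
    have P2: "poly (pderiv (pderiv P)) (s j) \<noteq> 0" using cs by simp
    have nd: "nondegenerate_critical_point ?F (pt3 0 (s j))" and lp: "lam h a b (s j) > 0"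
      using crit_gen[of "s j"] cs by auto
    note hs = hess_struct[OF conjunct1[OF cs] psi k0]
    have "poly P (s j) \<noteq> 0" using Ppos by (metis less_irrefl)
    then have "(poly P (s j))^2 > 0" by simp
    then have neg: "3*(poly P (s j))^2 * poly (pderiv (pderiv P)) (s j) / \<kappa>^3 < 0"
      using cs kpos by (simp add: mult_pos_neg divide_neg_pos)
    have "negativity_index ?F (pt3 0 (s j)) = 1"
      unfolding negativity_index_def by (rule negidx3[OF hs lp neg])
    then show ?thesis using nd by simp
  qed
  show ?thesis using inj rpart spart gmin by blast
qed


end
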